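(* Let $\mathcal{K}^{\langle\infty\rangle}$ be an unbounded simple nested fractal. There exists a constant $C_8$ such that for every $M\in\mathbb{Z}$, every $x\in\mathcal{K}^{\langle\infty\rangle}$ and every integer $n\ge1$, $$\#\mathcal{L}_{M,n,x}\le C_8\,n^{d_f},$$ where $d_f=\log N/\log L$.
   Context: Setting: $L>1$, $N\ge2$, $\nu_1=0,\dots,\nu_N\in\mathbb{R}^2$, $\Psi_i(x)=x/L+\nu_i$, and $\mathcal{K}^{\langle 0\rangle}=\bigcup_i\Psi_i(\mathcal{K}^{\langle 0\rangle})$ is a planar simple nested fractal (with $V_0^{\langle0\rangle}$ its set of essential fixed points, $k=\#V_0^{\langle0\rangle}\ge3$). $\mathcal{K}^{\langle M\rangle}=L^M\mathcal{K}^{\langle 0\rangle}$, $\mathcal{K}^{\langle\infty\rangle}=\bigcup_{M\ge0}\mathcal{K}^{\langle M\rangle}$. An $M$-complex is $\mathcal{K}^{\langle M\rangle}+\sum_{j=M+1}^{J}L^j\nu_{i_j}$ ($J\ge M+1$, $i_j\in\{1,\dots,N\}$); $\mathcal{T}_M$ is the set of all $M$-complexes. For fixed $x$: $\mathcal{L}_{M,1,x}=\{\Delta_M\in\mathcal{T}_M: x\in\Delta_M\}$ and, for $n\ge1$, $\mathcal{L}_{M,n+1,x}=\{\Delta_M\in\mathcal{T}_M\setminus\bigcup_{i=1}^n\mathcal{L}_{M,i,x}:\ \exists\,\widetilde{\Delta}_M\in\mathcal{L}_{M,n,x},\ \widetilde{\Delta}_M\cap\Delta_M\ne\emptyset\}$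 (the $M$-complexes "at graph distance $n$" from $x$). *)

theory Defs
  imports "HOL-Analysis.Analysis"
begin

type_synonym pt = "real ^ 2"

definition Psi :: "real \<Rightarrow> (nat \<Rightarrow> pt) \<Rightarrow> nat \<Rightarrow> pt \<Rightarrow> pt" where
  "Psi L \<nu> i x = (1 / L) *\<^sub>R x + \<nu> i"

definition Psi_word :: "real \<Rightarrow> (nat \<Rightarrow> pt) \<Rightarrow> nat list \<Rightarrow> pt \<Rightarrow> pt" where
  "Psi_word L \<nu> w = foldr (\<lambda>i f. Psi L \<nu> i \<circ> f) w id"

definition words :: "nat \<Rightarrow> nat \<Rightarrow> nat list set" where
  "words N n = {w. length w = n \<and> set w \<subseteq> {1..N}}"

definition fixed_points :: "real \<Rightarrow> nat \<Rightarrow> (nat \<Rightarrow> pt) \<Rightarrow> pt set" where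
  "fixed_points L N \<nu> = {z. \<exists>i\<in>{1..N}. Psi L \<nu> i z = z}"

definition essential_fixed_points :: "real \<Rightarrow> nat \<Rightarrow> (nat \<Rightarrow> pt) \<Rightarrow> pt set" where
  "essential_fixed_points L N \<nu> =
     {x \<in> fixed_points L N \<nu>. \<exists>y\<in>fixed_points L N \<nu>. y \<noteq> x \<and>
        (\<exists>i\<in>{1..N}. \<exists>j\<in>{1..N}. i \<noteq> j \<and> Psi L \<nu> i x = Psi L \<nu> j y)}"

definition vertices :: "real \<Rightarrow> nat \<Rightarrow> (nat \<Rightarrow> pt) \<Rightarrow> nat \<Rightarrow> pt set" where
  "vertices L N \<nu> n = (\<Union>w\<in>words N n. Psi_word L \<nu> w ` essential_fixed_points L N \<nu>)"

definition reflect_bisector :: "pt \<Rightarrow> pt \<Rightarrow> pt \<Rightarrow> pt" where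
  "reflect_bisector a b z =
     z - (2 * (((z - (1/2) *\<^sub>R (a + b)) \<bullet> (b - a)) / (norm (b - a))^2)) *\<^sub>R (b - a)"

text \<open>Simple (no rotations) planar nested fractal in the sense of Lindstrom:
  K is the (compact, nonempty) attractor of the IFS, the open set condition holds,
  and the connectivity, symmetry and nesting axioms hold.\<close>
definition simple_nested_fractal :: "real \<Rightarrow> nat \<Rightarrow> (nat \<Rightarrow> pt) \<Rightarrow> pt set \<Rightarrow> bool" where
  "simple_nested_fractal L N \<nu> K \<longleftrightarrow>
     L > 1 \<and> N \<ge> 2 \<and>
     compact K \<and> K \<noteq> {} \<and> K = (\<Union>i\<in>{1..N}. Psi L \<nu> i ` K) \<and>
     \<comment> \<open>open set condition\<close>
     (\<exists>U. open U \<and> bounded U \<and> U \<noteq> {} \<and>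
        (\<forall>i\<in>{1..N}. Psi L \<nu> i ` U \<subseteq> U) \<and>
        (\<forall>i\<in>{1..N}. \<forall>j\<in>{1..N}. i \<noteq> j \<longrightarrow> Psi L \<nu> i ` U \<inter> Psi L \<nu> j ` U = {})) \<and>
     \<comment> \<open>connectivity: any two 1-cells are joined by a chain of intersecting 1-cells\<close>
     (\<forall>i\<in>{1..N}. \<forall>j\<in>{1..N}.
        (i, j) \<in> {(a, b). a \<in> {1..N} \<and> b \<in> {1..N} \<and>
                           Psi L \<nu> a ` K \<inter> Psi L \<nu> b ` K \<noteq> {}}\<^sup>*) \<and>
     \<comment> \<open>symmetry\<close>
     (\<forall>a\<in>essential_fixed_points L N \<nu>. \<forall>b\<in>essential_fixed_points L N \<nu>. a \<noteq> b \<longrightarrow>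
        (\<forall>n. reflect_bisector a b ` vertices L N \<nu> n \<subseteq> vertices L N \<nu> n)) \<and>
     \<comment> \<open>nesting\<close>
     (\<forall>n. \<forall>w\<in>words N n. \<forall>w'\<in>words N n. w \<noteq> w' \<longrightarrow>
        Psi_word L \<nu> w ` K \<inter> Psi_word L \<nu> w' ` K =
        Psi_word L \<nu> w ` essential_fixed_points L N \<nu> \<inter>
        Psi_word L \<nu> w' ` essential_fixed_points L N \<nu>)"

definition K_inf :: "real \<Rightarrow> pt set \<Rightarrow> pt set" where
  "K_inf L K = (\<Union>M::nat. (\<lambda>y. (L ^ M) *\<^sub>R y) ` K)"

definition complexes :: "real \<Rightarrow> nat \<Rightarrow> (nat \<Rightarrow> pt) \<Rightarrow> pt set \<Rightarrow> int \<Rightarrow> pt set set" where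
  "complexes L N \<nu> K M =
     {(\<lambda>y. (L powr of_int M) *\<^sub>R y +
            (\<Sum>j\<in>{M+1..J}. (L powr of_int j) *\<^sub>R \<nu> (i j))) ` K
      | J (i :: int \<Rightarrow> nat). J \<ge> M + 1 \<and> (\<forall>j\<in>{M+1..J}. i j \<in> {1..N})}"

text \<open>Layers: LP T x n = (L_n, L_1 \<union> ... \<union> L_n) with L_1 = complexes containing x and
  L_(n+1) = complexes not in L_1..L_n meeting some member of L_n.\<close>
primrec layer_pair :: "'a set set \<Rightarrow> 'a \<Rightarrow> nat \<Rightarrow> 'a set set \<times> 'a set set" where
  "layer_pair T x 0 = ({}, {})"
| "layer_pair T x (Suc n) =
     (if n = 0 then ({\<Delta> \<in> T. x \<in> \<Delta>}, {\<Delta> \<in> T. x \<in> \<Delta>})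
      else (let Ln = fst (layer_pair T x n); U = snd (layer_pair T x n);
                new = {\<Delta> \<in> T - U. \<exists>\<Delta>'\<in>Ln. \<Delta>' \<inter> \<Delta> \<noteq> {}}
            in (new, U \<union> new)))"

definition layer :: "'a set set \<Rightarrow> 'a \<Rightarrow> nat \<Rightarrow> 'a set set" where
  "layer T x n = fst (layer_pair T x n)"

definition L_layer :: "real \<Rightarrow> nat \<Rightarrow> (nat \<Rightarrow> pt) \<Rightarrow> pt set \<Rightarrow> int \<Rightarrow> nat \<Rightarrow> pt \<Rightarrow> pt set set" where
  "L_layer L N \<nu> K M n x = layer (complexes L N \<nu> K M) x n"

end

theory Submission
  imports Defs
begin

primrec gsum :: "real \<Rightarrow> (nat \<Rightarrow> pt) \<Rightarrow> (nat \<Rightarrow> nat) \<Rightarrow> nat \<Rightarrow> pt" where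
  "gsum L \<nu> b 0 = 0"
| "gsum L \<nu> b (Suc n) = gsum L \<nu> b n + (L ^ Suc n) *\<^sub>R \<nu> (b (Suc n))"

definition Gset :: "real \<Rightarrow> nat \<Rightarrow> (nat \<Rightarrow> pt) \<Rightarrow> pt set" where
  "Gset L N \<nu> = {gsum L \<nu> b n | b n. \<forall>k\<in>{1..n}. b k \<in> {1..N}}"

lemma gsum_cong: "(\<forall>k\<in>{1..n}. b k = b' k) \<Longrightarrow> gsum L \<nu> b n = gsum L \<nu> b' n"
  by (induction n) auto

lemma gsum_pad:
  assumes "\<nu> 1 = 0"
  shows "gsum L \<nu> (\<lambda>k. if k \<le> n then b k else 1) (n + r) = gsum L \<nu> b n"
proof (induction r)
  case 0
  then show ?case by (simp add: gsum_cong)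
next
  case (Suc r)
  then show ?case using assms by simp
qed

lemma gsum_split:
  "gsum L \<nu> b (m + r) = gsum L \<nu> b m + (L ^ m) *\<^sub>R gsum L \<nu> (\<lambda>k. b (k + m)) r"
proof (induction r)
  case 0
  then show ?case by simp
next
  case (Suc r)
  then show ?case by (simp add: scaleR_add_right power_add algebra_simps)
qed

lemma gsum_int:
  assumes "L > 0"
  shows "(\<Sum>j\<in>{M+1..M+int n}. (L powr of_int j) *\<^sub>R \<nu> (i j))
        = (L powr of_int M) *\<^sub>R gsum L \<nu> (\<lambda>k. i (M + int k)) n"
proof (induction n)
  case 0
  then show ?case by simp
next
  case (Suc n)
  have e: "{M+1..M+int (Suc n)} = insert (M + int n + 1) {M+1..M+int n}" by auto
  have p: "L powr of_int (M + int n + 1) = L powr of_int M * L ^ Suc n"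
    using assms by (simp add: powr_add powr_realpow[symmetric] add.commute)
  let ?f = "\<lambda>j. (L powr of_int j) *\<^sub>R \<nu> (i j)"
  have "sum ?f {M+1..M+int (Suc n)} = ?f (M + int n + 1) + sum ?f {M+1..M+int n}"
    unfolding e by (subst sum.insert) auto
  also have "\<dots> = ?f (M + int n + 1) + (L powr of_int M) *\<^sub>R gsum L \<nu> (\<lambda>k. i (M + int k)) n"
    using Suc by simp
  finally show ?case using p by (simp add: scaleR_add_right add.commute add.left_commute)
qed

lemma gsum_in_K:
  assumes "L > 0" and sub: "\<forall>i\<in>{1..N}. Psi L \<nu> i ` K \<subseteq> K"
    and b: "\<forall>k\<in>{1..n}. b k \<in> {1..N}" and y: "y \<in> K"
  shows "\<exists>z\<in>K. y + gsum L \<nu> b n = (L ^ n) *\<^sub>R z"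
  using b
proof (induction n)
  case 0
  then show ?case using y by simp
next
  case (Suc n)
  then obtain z where z: "z \<in> K" "y + gsum L \<nu> b n = (L ^ n) *\<^sub>R z" by auto
  have a: "b (Suc n) \<in> {1..N}" using Suc.prems by auto
  have "Psi L \<nu> (b (Suc n)) z \<in> K" using sub a z by blast
  moreover have "y + gsum L \<nu> b (Suc n) = (L ^ Suc n) *\<^sub>R Psi L \<nu> (b (Suc n)) z"
    using z assms(1) by (simp add: Psi_def scaleR_add_right add.assoc)
  ultimately show ?case by blast
qed

lemma V_in_U:
  assumes "L > 0" and sub: "\<forall>i\<in>{1..N}. Psi L \<nu> i ` U \<subseteq> U"
    and b: "\<forall>k\<in>{1..n}. b k \<in> {1..N}" and y: "y \<in> U"
  shows "(1 / L ^ n) *\<^sub>R (y + gsum L \<nu> b n) \<in> U"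
  using b
proof (induction n)
  case 0
  then show ?case using y by simp
next
  case (Suc n)
  have a: "b (Suc n) \<in> {1..N}" using Suc.prems by auto
  have "(1 / L ^ Suc n) *\<^sub>R (y + gsum L \<nu> b (Suc n))
       = Psi L \<nu> (b (Suc n)) ((1 / L ^ n) *\<^sub>R (y + gsum L \<nu> b n))"
    using assms(1) by (simp add: Psi_def scaleR_add_right)
  moreover have "Psi L \<nu> (b (Suc n)) ` U \<subseteq> U" using sub a by blast
  ultimately show ?case using Suc by (auto simp: image_subset_iff)
qed

lemma V_step:
  assumes "L > 0"
  shows "(1 / L ^ Suc n) *\<^sub>R (y + gsum L \<nu> b (Suc n))
       = Psi L \<nu> (b (Suc n)) ((1 / L ^ n) *\<^sub>R (y + gsum L \<nu> b n))"
  using assms by (simp add: Psi_def scaleR_add_right)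

lemma gsum_disj:
  assumes L: "L > 0" and sub: "\<forall>i\<in>{1..N}. Psi L \<nu> i ` U \<subseteq> U"
    and dis: "\<forall>i\<in>{1..N}. \<forall>j\<in>{1..N}. i \<noteq> j \<longrightarrow> Psi L \<nu> i ` U \<inter> Psi L \<nu> j ` U = {}"
    and y: "y \<in> U" and y': "y' \<in> U"
  shows "(\<forall>k\<in>{1..n}. b k \<in> {1..N}) \<Longrightarrow> (\<forall>k\<in>{1..n}. b' k \<in> {1..N}) \<Longrightarrow>
     y + gsum L \<nu> b n = y' + gsum L \<nu> b' n \<Longrightarrow> gsum L \<nu> b n = gsum L \<nu> b' n"
proof (induction n)
  case 0
  then show ?case by simp
next
  case (Suc n)
  define V where "V = (1 / L ^ n) *\<^sub>R (y + gsum L \<nu> b n)"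
  define V' where "V' = (1 / L ^ n) *\<^sub>R (y' + gsum L \<nu> b' n)"
  have bn: "\<forall>k\<in>{1..n}. b k \<in> {1..N}" "\<forall>k\<in>{1..n}. b' k \<in> {1..N}" using Suc.prems by auto
  have VU: "V \<in> U" "V' \<in> U" unfolding V_def V'_def using V_in_U[OF L sub] bn y y' by auto
  have a: "b (Suc n) \<in> {1..N}" "b' (Suc n) \<in> {1..N}" using Suc.prems by auto
  have eq: "Psi L \<nu> (b (Suc n)) V = Psi L \<nu> (b' (Suc n)) V'"
    unfolding V_def V'_def using V_step[OF L, where y=y and b=b and n=n] V_step[OF L, where y=y' and b=b' and n=n] Suc.prems(3) by metis
  have ab: "b (Suc n) = b' (Suc n)"
  proof (rule ccontr)
    assume "b (Suc n) \<noteq> b' (Suc n)"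
    then have "Psi L \<nu> (b (Suc n)) ` U \<inter> Psi L \<nu> (b' (Suc n)) ` U = {}" using dis a by blast
    moreover have "Psi L \<nu> (b (Suc n)) V \<in> Psi L \<nu> (b (Suc n)) ` U"
       "Psi L \<nu> (b (Suc n)) V \<in> Psi L \<nu> (b' (Suc n)) ` U" using VU eq by (auto intro!: imageI, metis imageI)
    ultimately show False by blast
  qed
  have "V = V'" using eq ab L by (simp add: Psi_def)
  then have "y + gsum L \<nu> b n = y' + gsum L \<nu> b' n" unfolding V_def V'_def using L by simp
  then have "gsum L \<nu> b n = gsum L \<nu> b' n" using Suc.IH bn by blast
  then show ?case using ab by simp
qed

lemma G_disj:
  assumes L: "L > 0" and nu1: "\<nu> 1 = 0" and sub: "\<forall>i\<in>{1..N}. Psi L \<nu> i ` U \<subseteq> U"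
    and dis: "\<forall>i\<in>{1..N}. \<forall>j\<in>{1..N}. i \<noteq> j \<longrightarrow> Psi L \<nu> i ` U \<inter> Psi L \<nu> j ` U = {}"
    and N1: "N \<ge> 1"
    and g: "g \<in> Gset L N \<nu>" and g': "g' \<in> Gset L N \<nu>"
    and y: "y \<in> U" and y': "y' \<in> U" and eq: "y + g = y' + g'"
  shows "g = g'"
proof -
  obtain b n where b: "\<forall>k\<in>{1..n}. b k \<in> {1..N}" "g = gsum L \<nu> b n" using g unfolding Gset_def by auto
  obtain b' n' where b': "\<forall>k\<in>{1..n'}. b' k \<in> {1..N}" "g' = gsum L \<nu> b' n'" using g' unfolding Gset_def by auto
  define q where "q = max n n'"
  define c where "c = (\<lambda>k. if k \<le> n then b k else 1)"
  define c' where "c' = (\<lambda>k. if k \<le> n' then b' k else 1)"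
  have "gsum L \<nu> c (n + (q - n)) = g" unfolding c_def using gsum_pad[where \<nu>=\<nu>, OF nu1] b by simp
  then have cq: "gsum L \<nu> c q = g" unfolding q_def by simp
  have "gsum L \<nu> c' (n' + (q - n')) = g'" unfolding c'_def using gsum_pad[where \<nu>=\<nu>, OF nu1] b' by simp
  then have cq': "gsum L \<nu> c' q = g'" unfolding q_def by simp
  have "\<forall>k\<in>{1..q}. c k \<in> {1..N}" "\<forall>k\<in>{1..q}. c' k \<in> {1..N}"
    using b b' N1 unfolding c_def c'_def by auto
  then show ?thesis using gsum_disj[OF L sub dis y y', of q c c'] eq cq cq' by simp
qed

lemma count_ball:
  fixes G U :: "pt set"
  assumes oU: "open U" and bU: "bounded U" and neU: "U \<noteq> {}"
    and disj: "\<forall>g\<in>G. \<forall>g'\<in>G. \<forall>y\<in>U. \<forall>y'\<in>U. y + g = y' + g' \<longrightarrow> g = g'"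
  shows "\<exists>B\<ge>0. \<forall>c. finite (G \<inter> cball c R) \<and> real (card (G \<inter> cball c R)) \<le> B"
proof -
  obtain RU where RU: "\<forall>y\<in>U. norm y \<le> RU" using bU bounded_iff by auto
  define \<mu> where "\<mu> = measure lebesgue U"
  have Ulm: "U \<in> lmeasurable" using oU bU by (simp add: lmeasurable_open)
  obtain z where z: "z \<in> U" using neU by auto
  obtain e where e: "e > 0" "ball z e \<subseteq> U" using oU z open_contains_ball by blast
  have "0 < measure lebesgue (ball z e)" using e by simp
  also have "\<dots> \<le> \<mu>" unfolding \<mu>_def
    by (rule measure_mono_fmeasurable[OF e(2)]) (auto simp: Ulm)
  finally have mu: "\<mu> > 0" .
  define V where "V = measure lebesgue (cball (0::pt) (R + RU))"
  have tr_lm: "(+) g ` U \<in> lmeasurable" for g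
    using oU bU by (intro lmeasurable_open) (auto simp: bounded_translation open_translation)
  have key: "real (card F) * \<mu> \<le> V" if F: "finite F" "F \<subseteq> G \<inter> cball c R" for F c
  proof -
    have dj: "disjoint_family_on (\<lambda>g. (+) g ` U) F"
      unfolding disjoint_family_on_def
    proof (intro ballI impI)
      fix g g' assume gg: "g \<in> F" "g' \<in> F" "g \<noteq> g'"
      show "(+) g ` U \<inter> (+) g' ` U = {}"
      proof (rule ccontr)
        assume "(+) g ` U \<inter> (+) g' ` U \<noteq> {}"
        then obtain y y' where yy: "y \<in> U" "y' \<in> U" "g + y = g' + y'" by auto
        then have "y + g = y' + g'" by (simp add: add.commute)
        then show False using disj gg F yy by blast
      qed
    qed
    have "measure lebesgue (\<Union>g\<in>F. (+) g ` U) = (\<Sum>g\<in>F. measure lebesgue ((+) g ` U))"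
      proof (rule measure_finite_Union[OF F(1) _ dj])
      show "(\<lambda>g. (+) g ` U) ` F \<subseteq> sets lebesgue" using tr_lm by blast
      show "emeasure lebesgue ((+) i ` U) \<noteq> \<infinity>" for i using fmeasurableD2[OF tr_lm[of i]] by simp
    qed
    also have "\<dots> = real (card F) * \<mu>" by (simp add: measure_translation \<mu>_def)
    finally have eq: "measure lebesgue (\<Union>g\<in>F. (+) g ` U) = real (card F) * \<mu>" .
    have sub: "(\<Union>g\<in>F. (+) g ` U) \<subseteq> cball c (R + RU)"
    proof
      fix w assume "w \<in> (\<Union>g\<in>F. (+) g ` U)"
      then obtain g y where gy: "g \<in> F" "y \<in> U" "w = g + y" by auto
      have "dist c g \<le> R" using gy F by auto
      moreover have "norm y \<le> RU" using RU gy by auto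
      moreover have "dist c (g + y) \<le> dist c g + dist g (g + y)" by (rule dist_triangle)
      moreover have "dist g (g + y) = norm y" by (simp add: dist_norm)
      ultimately show "w \<in> cball c (R + RU)" using gy by simp
    qed
    have "measure lebesgue (\<Union>g\<in>F. (+) g ` U) \<le> measure lebesgue (cball c (R + RU))"
    proof (rule measure_mono_fmeasurable[OF sub])
      show "(\<Union>g\<in>F. (+) g ` U) \<in> sets lebesgue" using F(1) tr_lm by (intro sets.finite_UN) auto
    qed simp
    also have "\<dots> = V" unfolding V_def using cball_translation[of c 0 "R + RU"]
        measure_translation[of c "cball 0 (R + RU)"] by (metis add.right_neutral)
    finally show ?thesis using eq by simp
  qed
  have "finite (G \<inter> cball c R) \<and> real (card (G \<inter> cball c R)) \<le> V / \<mu>" for c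
  proof -
    have fin: "finite (G \<inter> cball c R)"
    proof (rule ccontr)
      assume "\<not> finite (G \<inter> cball c R)"
      then obtain F where F: "finite F" "card F = nat \<lceil>V / \<mu>\<rceil> + 1" "F \<subseteq> G \<inter> cball c R"
        using infinite_arbitrarily_large by blast
      have "real (card F) * \<mu> \<le> V" using key F by blast
      then have "real (card F) \<le> V / \<mu>" using mu by (simp add: field_simps)
      moreover have "real (card F) > V / \<mu>" using F(2)
        by (simp) linarith
      ultimately show False by simp
    qed
    have "real (card (G \<inter> cball c R)) * \<mu> \<le> V" using key fin by blast
    then show ?thesis using fin mu by (simp add: field_simps)
  qed
  moreover have "V / \<mu> \<ge> 0" using mu unfolding V_def by simp
  ultimately show ?thesis by blast
qed

lemma layer_ball:
  fixes T :: "pt set set"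
  assumes d: "\<forall>P\<in>T. \<forall>a\<in>P. \<forall>b\<in>P. dist a b \<le> d"
  shows "n \<ge> 1 \<Longrightarrow> \<forall>P\<in>layer T x n. P \<in> T \<and> P \<subseteq> cball x (real n * d)"
proof (induction n)
  case 0
  then show ?case by simp
next
  case (Suc n)
  show ?case
  proof (cases "n = 0")
    case True
    then show ?thesis using d by (auto simp: layer_def)
  next
    case False
    have lay: "layer T x (Suc n) = {\<Delta> \<in> T - snd (layer_pair T x n). \<exists>\<Delta>'\<in>layer T x n. \<Delta>' \<inter> \<Delta> \<noteq> {}}"
      using False by (simp add: layer_def Let_def)
    have IH: "\<forall>P\<in>layer T x n. P \<in> T \<and> P \<subseteq> cball x (real n * d)" using Suc.IH False by simp
    show ?thesis
    proof
      fix P assume P: "P \<in> layer T x (Suc n)"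
      then obtain Q z where Q: "P \<in> T" "Q \<in> layer T x n" "z \<in> Q" "z \<in> P" using lay by auto
      have "P \<subseteq> cball x (real (Suc n) * d)"
      proof
        fix a assume a: "a \<in> P"
        have "z \<in> cball x (real n * d)" using IH Q by blast
        then have "dist x z \<le> real n * d" by simp
        moreover have "dist z a \<le> d" using d Q a by blast
        moreover have "dist x a \<le> dist x z + dist z a" by (rule dist_triangle)
        ultimately show "a \<in> cball x (real (Suc n) * d)" by (simp add: algebra_simps)
      qed
      then show "P \<in> T \<and> P \<subseteq> cball x (real (Suc n) * d)" using Q by simp
    qed
  qed
qed

lemma complex_rep:
  assumes L: "L > 0" and nu1: "\<nu> 1 = 0" and N1: "N \<ge> 1"
    and P: "P \<in> complexes L N \<nu> K M"
  shows "\<exists>w\<in>PiE {1..m} (\<lambda>_. {1..N}). \<exists>g\<in>Gset L N \<nu>.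
           P = (\<lambda>y. (L powr of_int M) *\<^sub>R (y + gsum L \<nu> w m + (L ^ m) *\<^sub>R g)) ` K"
proof -
  obtain J i where Ji: "J \<ge> M + 1" "\<forall>j\<in>{M+1..J}. i j \<in> {1..N}"
    "P = (\<lambda>y. (L powr of_int M) *\<^sub>R y + (\<Sum>j\<in>{M+1..J}. (L powr of_int j) *\<^sub>R \<nu> (i j))) ` K"
    using P unfolding complexes_def by blast
  define n' where "n' = nat (J - M)"
  have J: "J = M + int n'" using Ji(1) unfolding n'_def by simp
  define b where "b = (\<lambda>k. i (M + int k))"
  have sum: "(\<Sum>j\<in>{M+1..J}. (L powr of_int j) *\<^sub>R \<nu> (i j)) = (L powr of_int M) *\<^sub>R gsum L \<nu> b n'"
    unfolding J b_def by (rule gsum_int[OF L])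
  have bv: "\<forall>k\<in>{1..n'}. b k \<in> {1..N}"
  proof
    fix k assume k: "k \<in> {1..n'}"
    then have "M + int k \<in> {M+1..J}" using J by auto
    then show "b k \<in> {1..N}" using Ji(2) unfolding b_def by blast
  qed
  define q where "q = max n' m"
  define c where "c = (\<lambda>k. if k \<le> n' then b k else 1)"
  have cv: "c k \<in> {1..N}" if "k \<ge> 1" for k using bv N1 that unfolding c_def by auto
  have "gsum L \<nu> c (n' + (q - n')) = gsum L \<nu> b n'" unfolding c_def using gsum_pad[where \<nu>=\<nu>, OF nu1] by simp
  then have cq: "gsum L \<nu> c q = gsum L \<nu> b n'" unfolding q_def by simp
  have "gsum L \<nu> c (m + (q - m)) = gsum L \<nu> c m + (L ^ m) *\<^sub>R gsum L \<nu> (\<lambda>k. c (k + m)) (q - m)"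
    by (rule gsum_split)
  then have split: "gsum L \<nu> c q = gsum L \<nu> c m + (L ^ m) *\<^sub>R gsum L \<nu> (\<lambda>k. c (k + m)) (q - m)"
    unfolding q_def by simp
  define w where "w = restrict c {1..m}"
  define g where "g = gsum L \<nu> (\<lambda>k. c (k + m)) (q - m)"
  have w: "w \<in> PiE {1..m} (\<lambda>_. {1..N})" unfolding w_def using cv by auto
  have gw: "gsum L \<nu> w m = gsum L \<nu> c m" unfolding w_def by (rule gsum_cong) auto
  have g: "g \<in> Gset L N \<nu>" unfolding g_def Gset_def using cv by fastforce
  have "P = (\<lambda>y. (L powr of_int M) *\<^sub>R (y + gsum L \<nu> w m + (L ^ m) *\<^sub>R g)) ` K"
    unfolding Ji(3) sum cq[symmetric] split gw g_def
    by (simp add: scaleR_add_right add.assoc)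
  then show ?thesis using w g by blast
qed

lemma pow_bound:
  assumes L: "L > 1" and N: "N \<ge> 1" and n: "n \<ge> 1"
  defines "m \<equiv> nat \<lceil>ln (real n) / ln L\<rceil>"
  shows "real n \<le> L ^ m" and "real N ^ m \<le> real N * real n powr (ln (real N) / ln L)"
proof -
  have lnL: "ln L > 0" using L by simp
  have x0: "ln (real n) / ln L \<ge> 0" using n lnL by simp
  have m1: "ln (real n) / ln L \<le> real m" unfolding m_def by (rule real_nat_ceiling_ge)
  have m2: "real m \<le> ln (real n) / ln L + 1" unfolding m_def using x0 by linarith
  have "real n = L powr (ln (real n) / ln L)" using n L lnL by (simp add: powr_def)
  also have "\<dots> \<le> L powr real m" using m1 L by (intro powr_mono) auto
  also have "\<dots> = L ^ m" using L by (simp add: powr_realpow)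
  finally show "real n \<le> L ^ m" .
  have "real N ^ m = real N powr real m" using N by (simp add: powr_realpow)
  also have "\<dots> \<le> real N powr (ln (real n) / ln L + 1)" using m2 N by (intro powr_mono) auto
  also have "\<dots> = real N * real N powr (ln (real n) / ln L)" using N by (simp add: powr_add)
  also have "real N powr (ln (real n) / ln L) = real n powr (ln (real N) / ln L)"
    using N n by (simp add: powr_def)
  finally show "real N ^ m \<le> real N * real n powr (ln (real N) / ln L)" .
qed

theorem lemmaA4:
  fixes L :: real and N :: nat and \<nu> :: "nat \<Rightarrow> real ^ 2" and K :: "(real ^ 2) set"
  assumes "L > 1" and "N \<ge> 2" and "\<nu> 1 = 0"
    and "simple_nested_fractal L N \<nu> K"
    and "card (essential_fixed_points L N \<nu>) \<ge> 3"
  shows "\<exists>C8::real. \<forall>M::int. \<forall>x\<in>K_inf L K. \<forall>n::nat. n \<ge> 1 \<longrightarrow>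
           finite (L_layer L N \<nu> K M n x) \<and>
           real (card (L_layer L N \<nu> K M n x)) \<le> C8 * real n powr (ln (real N) / ln L)"
proof -
  have L1: "L > 1" and L0: "L > 0" and N1: "N \<ge> 1" and nu1: "\<nu> 1 = 0" using assms by auto
  have snf1: "compact K" using assms(4) unfolding simple_nested_fractal_def by (elim conjE)
  have snf2: "K \<noteq> {}" using assms(4) unfolding simple_nested_fractal_def by (elim conjE)
  have snf3: "K = (\<Union>i\<in>{1..N}. Psi L \<nu> i ` K)" using assms(4) unfolding simple_nested_fractal_def by (elim conjE)
  note snf = snf1 snf2 snf3
  obtain U where U: "open U" "bounded U" "U \<noteq> {}" "\<forall>i\<in>{1..N}. Psi L \<nu> i ` U \<subseteq> U"
    "\<forall>i\<in>{1..N}. \<forall>j\<in>{1..N}. i \<noteq> j \<longrightarrow> Psi L \<nu> i ` U \<inter> Psi L \<nu> j ` U = {}"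
    using assms(4) unfolding simple_nested_fractal_def by (elim conjE exE) blast
  have subK: "\<forall>i\<in>{1..N}. Psi L \<nu> i ` K \<subseteq> K" using snf(3) by blast
  obtain RK where RK: "RK > 0" "\<forall>y\<in>K. norm y \<le> RK"
    using compact_imp_bounded[OF snf(1)] bounded_pos by blast
  define G where "G = Gset L N \<nu>"
  have Gd: "\<forall>g\<in>G. \<forall>g'\<in>G. \<forall>y\<in>U. \<forall>y'\<in>U. y + g = y' + g' \<longrightarrow> g = g'"
    unfolding G_def using G_disj[OF L0 nu1 U(4) U(5) N1] by blast
  obtain B where B: "B \<ge> 0" "\<forall>c. finite (G \<inter> cball c (3 * RK)) \<and> real (card (G \<inter> cball c (3 * RK))) \<le> B"
    using count_ball[OF U(1-3) Gd, of "3 * RK"] by blast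
  define D where "D = 2 * RK"
  have "finite (L_layer L N \<nu> K M n x) \<and>
           real (card (L_layer L N \<nu> K M n x)) \<le> (real N * B) * real n powr (ln (real N) / ln L)"
    if n: "n \<ge> 1" for M n x
  proof -
    define s where "s = L powr of_int M"
    have s0: "s > 0" unfolding s_def using L0 by simp
    define T where "T = complexes L N \<nu> K M"
    have diam: "\<forall>P\<in>T. \<forall>a\<in>P. \<forall>b\<in>P. dist a b \<le> s * D"
    proof (intro ballI)
      fix P a b assume P: "P \<in> T" and a: "a \<in> P" and b: "b \<in> P"
      obtain w g where "P = (\<lambda>y. s *\<^sub>R (y + gsum L \<nu> w 0 + (L ^ 0) *\<^sub>R g)) ` K"
        using complex_rep[where \<nu>=\<nu> and P=P and K=K and M=M and m=0, OF L0 nu1 N1] P unfolding T_def s_def by blast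
      then obtain ya yb where y: "ya \<in> K" "yb \<in> K" "a = s *\<^sub>R (ya + g)" "b = s *\<^sub>R (yb + g)"
        using a b by auto
      have "dist a b = s * norm (ya - yb)" using y s0 
        by (simp add: dist_norm flip: scaleR_diff_right)
      also have "\<dots> \<le> s * (norm ya + norm yb)" using s0 norm_triangle_ineq4[of ya yb] by simp
      also have "\<dots> \<le> s * D"
      proof -
        have "norm ya + norm yb \<le> D" using RK y unfolding D_def by (smt (verit))
        then show ?thesis using s0 by (simp add: mult_left_mono)
      qed
      finally show "dist a b \<le> s * D" .
    qed
    define A where "A = {P\<in>T. P \<subseteq> cball x (real n * (s * D))}"
    have layA: "L_layer L N \<nu> K M n x \<subseteq> A"
      using layer_ball[OF diam, of n x] n unfolding A_def L_layer_def T_def by blast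
    define m where "m = nat \<lceil>ln (real n) / ln L\<rceil>"
    have nm: "real n \<le> L ^ m" and Nm: "real N ^ m \<le> real N * real n powr (ln (real N) / ln L)"
      using pow_bound[OF L1 N1 n] unfolding m_def by auto
    have Lm: "L ^ m > 0" using L0 by simp
    define c where "c = (1 / (s * L ^ m)) *\<^sub>R x"
    define F where "F = (\<lambda>(w, g). (\<lambda>y. s *\<^sub>R (y + gsum L \<nu> w m + (L ^ m) *\<^sub>R g)) ` K)"
    have AF: "A \<subseteq> F ` (PiE {1..m} (\<lambda>_. {1..N}) \<times> (G \<inter> cball c (3 * RK)))"
    proof
      fix P assume PA: "P \<in> A"
      then obtain w g where wg: "w \<in> PiE {1..m} (\<lambda>_. {1..N})" "g \<in> G"
        "P = (\<lambda>y. s *\<^sub>R (y + gsum L \<nu> w m + (L ^ m) *\<^sub>R g)) ` K"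
        using complex_rep[where \<nu>=\<nu> and P=P and K=K and M=M and m=m, OF L0 nu1 N1] unfolding A_def T_def s_def G_def by blast
      obtain y0 where y0: "y0 \<in> K" using snf(2) by auto
      have wv: "\<forall>k\<in>{1..m}. w k \<in> {1..N}" using wg(1) by auto
      obtain z where z: "z \<in> K" "y0 + gsum L \<nu> w m = (L ^ m) *\<^sub>R z"
        using gsum_in_K[OF L0 subK wv y0] by blast
      have "s *\<^sub>R (y0 + gsum L \<nu> w m + (L ^ m) *\<^sub>R g) \<in> P" using wg(3) y0 by auto
      then have "(s * L ^ m) *\<^sub>R (z + g) \<in> cball x (real n * (s * D))"
        using PA z unfolding A_def by (auto simp: scaleR_add_right)
      then have d1: "norm (x - (s * L ^ m) *\<^sub>R (z + g)) \<le> real n * (s * D)" by (simp add: dist_norm)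
      have "c - (z + g) = (1 / (s * L ^ m)) *\<^sub>R (x - (s * L ^ m) *\<^sub>R (z + g))"
        unfolding c_def using s0 Lm L0 by (simp add: scaleR_diff_right)
      then have "norm (c - (z + g)) = norm (x - (s * L ^ m) *\<^sub>R (z + g)) / (s * L ^ m)"
        using s0 Lm by simp
      also have "\<dots> \<le> real n * (s * D) / (s * L ^ m)" by (rule divide_right_mono[OF d1]) (use s0 Lm in simp)
      also have "\<dots> = real n * D / L ^ m" using s0 by simp
      also have "\<dots> \<le> D" using nm Lm RK unfolding D_def by (simp add: field_simps)
      finally have nc: "norm (c - (z + g)) \<le> D" .
      have "norm (c - g) \<le> norm (c - (z + g)) + norm z"
        using norm_triangle_ineq[of "c - (z + g)" z] by (simp add: algebra_simps)
      moreover have "norm z \<le> RK" using RK z by blast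
      ultimately have "dist c g \<le> 3 * RK" using nc unfolding D_def by (simp add: dist_norm)
      then show "P \<in> F ` (PiE {1..m} (\<lambda>_. {1..N}) \<times> (G \<inter> cball c (3 * RK)))"
        using wg unfolding F_def by (auto intro!: image_eqI[where x="(w, g)"])
    qed
    have finP: "finite (PiE {1..m} (\<lambda>_. {1..N}))" by (simp add: finite_PiE)
    have finG: "finite (G \<inter> cball c (3 * RK))" using B by blast
    have finA: "finite A" using AF finP finG by (meson finite_SigmaI finite_imageI finite_subset)
    have "card A \<le> card (F ` (PiE {1..m} (\<lambda>_. {1..N}) \<times> (G \<inter> cball c (3 * RK))))"
      using AF finP finG by (intro card_mono) auto
    also have "\<dots> \<le> card (PiE {1..m} (\<lambda>_. {1..N}) \<times> (G \<inter> cball c (3 * RK)))"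
      by (rule card_image_le) (use finP finG in auto)
    also have "\<dots> = N ^ m * card (G \<inter> cball c (3 * RK))"
      by (simp add: card_cartesian_product card_PiE)
    finally have cA: "real (card A) \<le> real N ^ m * real (card (G \<inter> cball c (3 * RK)))"
      by (metis of_nat_le_iff of_nat_mult of_nat_power)
    also have "\<dots> \<le> real N ^ m * B" using B by (intro mult_left_mono) auto
    also have "\<dots> \<le> (real N * real n powr (ln (real N) / ln L)) * B" using Nm B by (intro mult_right_mono) auto
    finally have cA2: "real (card A) \<le> (real N * B) * real n powr (ln (real N) / ln L)" by (simp add: ac_simps)
    have "card (L_layer L N \<nu> K M n x) \<le> card A" using layA finA by (rule card_mono[rotated])
    moreover have "finite (L_layer L N \<nu> K M n x)" using layA finA by (rule finite_subset)
    ultimately show ?thesis using cA2 by (meson of_nat_le_iff order_trans)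
  qed
  then show ?thesis by blast
qed

end
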